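(* Let $\rho=(r_n)_{n\in\omega}$ be a sequence of positive integers with $r_0=1$ and $r_n\mid r_{n+1}$ for all $n$. Let $G$ be a torsion-free abelian group with $G_\rho:=\bigcap_{n\in\omega}Gr_n=0$. Then $\mathrm{Ext}(\mathbb{Z}_{(\rho)},G)=0$ if and only if $G$ is complete in the $\rho$-topology.
   Context: $\mathbb{Z}_{(\rho)}=\langle 1/r_n:n\in\omega\rangle\subseteq\mathbb{Q}$ is the subgroup of $\mathbb{Q}$ generated by the $1/r_n$. The $\rho$-topology on $G$ is the group topology with basis of neighbourhoods of $0$ the subgroups $Gr_n$ $(n\in\omega)$; it is Hausdorff iff $G_\rho=0$. $G$ is complete in the $\rho$-topology if every Cauchy sequence in this topology converges in $G$. *)

theory Defs
  imports "HOL-Algebra.Algebra"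
begin

text \<open>Abelian groups are HOL-Algebra (multiplicatively written) commutative groups.\<close>

definition rat_add_group :: "rat monoid" where
  "rat_add_group = \<lparr>carrier = UNIV, monoid.mult = (+), one = 0\<rparr>"

definition Zrho :: "(nat \<Rightarrow> nat) \<Rightarrow> rat monoid" where
  "Zrho r = rat_add_group\<lparr>carrier := generate rat_add_group (range (\<lambda>n. 1 / of_nat (r n)))\<rparr>"

text \<open>The subgroup G r_n = {x^k | x in G} (written additively in the paper as G k).\<close>
definition mult_sub :: "('g, 'b) monoid_scheme \<Rightarrow> nat \<Rightarrow> 'g set" where
  "mult_sub G k = {x [^]\<^bsub>G\<^esub> k | x. x \<in> carrier G}"

definition torsion_free :: "('g, 'b) monoid_scheme \<Rightarrow> bool" where
  "torsion_free G \<longleftrightarrow> (\<forall>x\<in>carrier G. \<forall>n::nat. n > 0 \<and> x [^]\<^bsub>G\<^esub> n = \<one>\<^bsub>G\<^esub> \<longrightarrow> x = \<one>\<^bsub>G\<^esub>)"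

text \<open>Cauchy sequences and convergence in the rho-topology (basis of neighbourhoods
  of the identity: the subgroups G r_n).\<close>
definition rho_cauchy :: "('g, 'b) monoid_scheme \<Rightarrow> (nat \<Rightarrow> nat) \<Rightarrow> (nat \<Rightarrow> 'g) \<Rightarrow> bool" where
  "rho_cauchy G r x \<longleftrightarrow> (\<forall>n. \<exists>N. \<forall>i\<ge>N. \<forall>j\<ge>N. x i \<otimes>\<^bsub>G\<^esub> inv\<^bsub>G\<^esub> (x j) \<in> mult_sub G (r n))"

definition rho_converges :: "('g, 'b) monoid_scheme \<Rightarrow> (nat \<Rightarrow> nat) \<Rightarrow> (nat \<Rightarrow> 'g) \<Rightarrow> 'g \<Rightarrow> bool" where
  "rho_converges G r x g \<longleftrightarrow> (\<forall>n. \<exists>N. \<forall>i\<ge>N. x i \<otimes>\<^bsub>G\<^esub> inv\<^bsub>G\<^esub> g \<in> mult_sub G (r n))"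

definition rho_complete :: "('g, 'b) monoid_scheme \<Rightarrow> (nat \<Rightarrow> nat) \<Rightarrow> bool" where
  "rho_complete G r \<longleftrightarrow> (\<forall>x. (\<forall>i. x i \<in> carrier G) \<and> rho_cauchy G r x \<longrightarrow>
      (\<exists>g\<in>carrier G. rho_converges G r x g))"

text \<open>Every extension is isomorphic to one whose underlying set is carrier G \<times> carrier A,
  so it suffices to let E range over groups carried by subsets of type 'g \<times> 'a.\<close>
definition ext_vanishes :: "('a, 'c) monoid_scheme \<Rightarrow> ('g, 'b) monoid_scheme \<Rightarrow> bool" where
  "ext_vanishes A G \<longleftrightarrow>
     (\<forall>(E :: ('g \<times> 'a) monoid) i p.
        comm_group E \<and> i \<in> hom G E \<and> inj_on i (carrier G) \<and>
        p \<in> hom E A \<and> p ` carrier E = carrier A \<and> i ` carrier G = kernel E A p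
        \<longrightarrow> (\<exists>s \<in> hom A E. \<forall>a\<in>carrier A. p (s a) = a))"

end

theory Submission
  imports Defs
begin


lemma rat_add_comm_group: "comm_group rat_add_group"
  by (rule comm_groupI) (auto simp: rat_add_group_def intro: exI[of _ "-x" for x])

lemma Zrho_simps [simp]:
  "carrier (Zrho r) = generate rat_add_group (range (\<lambda>n. 1 / of_nat (r n)))"
  "x \<otimes>\<^bsub>Zrho r\<^esub> y = x + y" "\<one>\<^bsub>Zrho r\<^esub> = 0"
  by (auto simp: Zrho_def rat_add_group_def)

lemma Zrho_subgroup: "subgroup (carrier (Zrho r)) rat_add_group"
  using group.generate_is_subgroup[of rat_add_group] rat_add_comm_group
  by (simp add: comm_group.axioms(2) rat_add_group_def)

lemma Zrho_comm_group: "comm_group (Zrho r)"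
proof -
  interpret comm_group rat_add_group by (rule rat_add_comm_group)
  have "group (Zrho r)" unfolding Zrho_def
    using subgroup.subgroup_is_group[OF Zrho_subgroup[of r]] is_group by (simp add: Zrho_def)
  then show ?thesis by (rule group.group_comm_groupI) auto
qed

lemma Zrho_group: "group (Zrho r)"
  using Zrho_comm_group comm_group.axioms(2) by blast

lemma Zrho_closed:
  assumes "x \<in> carrier (Zrho r)" "y \<in> carrier (Zrho r)"
  shows "x + y \<in> carrier (Zrho r)" "- x \<in> carrier (Zrho r)" "0 \<in> carrier (Zrho r)"
proof -
  interpret group "Zrho r" by (rule Zrho_group)
  show "x + y \<in> carrier (Zrho r)" using m_closed[OF assms] by simp
  show "0 \<in> carrier (Zrho r)" using one_closed by simp
  obtain z where "z \<in> carrier (Zrho r)" "z + x = 0" using l_inv_ex[OF assms(1)] by auto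
  then show "- x \<in> carrier (Zrho r)" by (metis add.commute add_eq_0_iff)
qed

lemma Zrho_inv: "x \<in> carrier (Zrho r) \<Longrightarrow> inv\<^bsub>Zrho r\<^esub> x = - x"
proof -
  assume x: "x \<in> carrier (Zrho r)"
  interpret group "Zrho r" by (rule Zrho_group)
  show ?thesis using inv_equality[of "-x" x] x Zrho_closed[OF x x] by simp
qed

lemma Zrho_nat_pow: "x [^]\<^bsub>Zrho r\<^esub> (n::nat) = of_nat n * x"
  by (induction n) (auto simp: algebra_simps)

lemma Zrho_int_pow: "x \<in> carrier (Zrho r) \<Longrightarrow> x [^]\<^bsub>Zrho r\<^esub> (k::int) = of_int k * x"
proof -
  assume x: "x \<in> carrier (Zrho r)"
  interpret group "Zrho r" by (rule Zrho_group)
  have c: "of_nat (nat (-k)) * x \<in> carrier (Zrho r)"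
    using nat_pow_closed[OF x, of "nat (-k)"] by (simp add: Zrho_nat_pow)
  show ?thesis
    using Zrho_inv[OF c] 
    by (auto simp: int_pow_def2 Zrho_nat_pow simp del: Zrho_simps(1))
qed

lemma gen_in: "1 / of_nat (r n) \<in> carrier (Zrho r)"
  by (auto intro: generate.incl)

lemma Zrho_int_mono:
  fixes q :: rat
  assumes "\<forall>n. r n dvd r (Suc n)" "q * of_nat (r n) \<in> \<int>" "n \<le> m"
  shows "q * of_nat (r m) \<in> \<int>"
proof -
  have "r n dvd r m" using assms(3) by (induction m rule: dec_induct) (auto intro: dvd_trans assms(1)[rule_format])
  then obtain k where "r m = r n * k" by auto
  then have eq: "q * of_nat (r m) = (q * of_nat (r n)) * of_nat k" by (simp add: mult.assoc)
  have mem: "(q * of_nat (r n)) * of_nat k \<in> \<int>"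
    by (rule Ints_mult[OF assms(2)]) (rule Ints_of_nat)
  show ?thesis unfolding eq by (rule mem)
qed

lemma Zrho_int:
  assumes "\<forall>n. r n dvd r (Suc n)" "\<forall>n. r n > 0"
  shows "(q::rat) \<in> carrier (Zrho r) \<Longrightarrow> \<exists>N. q * of_nat (r N) \<in> \<int>"
  unfolding Zrho_simps
proof (induction q rule: generate.induct)
  case one then show ?case by (intro exI[of _ 0]) (simp add: rat_add_group_def)
next
  case (incl h)
  then obtain n where "h = 1 / of_nat (r n)" by auto
  then show ?case using assms(2) by (intro exI[of _ n]) simp
next
  case (inv h)
  then obtain n where "h = 1 / of_nat (r n)" by auto
  moreover have "inv\<^bsub>rat_add_group\<^esub> h = - h"
    by (rule group.inv_equality[OF comm_group.axioms(2)[OF rat_add_comm_group]])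
       (simp_all add: rat_add_group_def)
  ultimately show ?case using assms(2) by (intro exI[of _ n]) simp
next
  case (eng h1 h2)
  then obtain n1 n2 where "h1 * of_nat (r n1) \<in> \<int>" "h2 * of_nat (r n2) \<in> \<int>" by auto
  then have "h1 * of_nat (r (max n1 n2)) \<in> \<int>" "h2 * of_nat (r (max n1 n2)) \<in> \<int>"
    using Zrho_int_mono[OF assms(1)] by (meson max.cobounded1 max.cobounded2)+
  then have "(h1 + h2) * of_nat (r (max n1 n2)) \<in> \<int>" by (simp add: distrib_right)
  then show ?case by (intro exI[of _ "max n1 n2"]) (simp add: rat_add_group_def)
qed



definition chi :: "(nat \<Rightarrow> nat) \<Rightarrow> rat \<Rightarrow> nat \<Rightarrow> int" where
  "chi r q j = (if q * of_nat (r j) \<in> \<int> then \<lfloor>q * of_nat (r j)\<rfloor> else 0)"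

definition prodg :: "('g, 'b) monoid_scheme \<Rightarrow> (nat \<Rightarrow> 'g) \<Rightarrow> (nat \<Rightarrow> int) \<Rightarrow> nat \<Rightarrow> 'g" where
  "prodg G g f M = finprod G (\<lambda>j. g j [^]\<^bsub>G\<^esub> f j) {..<M}"

definition dco :: "(nat \<Rightarrow> nat) \<Rightarrow> rat \<Rightarrow> rat \<Rightarrow> nat \<Rightarrow> int" where
  "dco r q q' j = chi r (q + q') j - chi r q j - chi r q' j"

definition coc :: "('g, 'b) monoid_scheme \<Rightarrow> (nat \<Rightarrow> nat) \<Rightarrow> (nat \<Rightarrow> 'g) \<Rightarrow> rat \<Rightarrow> rat \<Rightarrow> 'g" where
  "coc G r g q q' = prodg G g (dco r q q') (SOME M. \<forall>j\<ge>M. dco r q q' j = 0)"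

definition emult :: "('g, 'b) monoid_scheme \<Rightarrow> (nat \<Rightarrow> nat) \<Rightarrow> (nat \<Rightarrow> 'g) \<Rightarrow> 'g \<times> rat \<Rightarrow> 'g \<times> rat \<Rightarrow> 'g \<times> rat" where
  "emult G r g x y = (fst x \<otimes>\<^bsub>G\<^esub> fst y \<otimes>\<^bsub>G\<^esub> coc G r g (snd x) (snd y), snd x + snd y)"

definition extE :: "('g, 'b) monoid_scheme \<Rightarrow> (nat \<Rightarrow> nat) \<Rightarrow> (nat \<Rightarrow> 'g) \<Rightarrow> ('g \<times> rat) monoid" where
  "extE G r g = \<lparr>carrier = carrier G \<times> carrier (Zrho r), monoid.mult = emult G r g, one = (\<one>\<^bsub>G\<^esub>, 0)\<rparr>"

lemma chi_int: "q * of_nat (r j) \<in> \<int> \<Longrightarrow> of_int (chi r q j) = q * of_nat (r j)"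
  by (auto simp: chi_def elim: Ints_cases)

lemma dco_zero:
  assumes "q * of_nat (r j) \<in> \<int>" "q' * of_nat (r j) \<in> \<int>"
  shows "dco r q q' j = 0"
proof -
  have s: "(q + q') * of_nat (r j) \<in> \<int>" using assms by (simp add: distrib_right)
  have "(of_int (dco r q q' j) :: rat) = 0"
    using chi_int[of "q+q'" r j] chi_int[of q r j] chi_int[of q' r j] s assms
    by (simp add: dco_def distrib_right)
  then show ?thesis by simp
qed

lemma dco_comm: "dco r q q' = dco r q' q"
  by (auto simp: dco_def add.commute fun_eq_iff)

lemma dco_zero_left: "dco r 0 q = (\<lambda>_. 0)"
  by (auto simp: dco_def chi_def fun_eq_iff)

locale rset = comm_group G for G (structure) +
  fixes r :: "nat \<Rightarrow> nat"
  assumes rpos: "\<forall>n. r n > 0" and r0: "r 0 = 1" and rdvd: "\<forall>n. r n dvd r (Suc n)"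
begin

lemma int_mono: "q * of_nat (r n) \<in> \<int> \<Longrightarrow> n \<le> m \<Longrightarrow> (q::rat) * of_nat (r m) \<in> \<int>"
  using Zrho_int_mono[OF rdvd] by blast

lemma int_ex: "q \<in> carrier (Zrho r) \<Longrightarrow> \<exists>N. q * of_nat (r N) \<in> \<int>"
  using Zrho_int[OF rdvd rpos] by blast

lemma r_dvd: "n \<le> m \<Longrightarrow> r n dvd r m"
  by (induction m rule: dec_induct) (auto intro: dvd_trans rdvd[rule_format])

lemma int_ex2:
  assumes "q \<in> carrier (Zrho r)" "q' \<in> carrier (Zrho r)"
  obtains M where "q * of_nat (r M) \<in> \<int>" "q' * of_nat (r M) \<in> \<int>"
proof -
  obtain n1 n2 where "q * of_nat (r n1) \<in> \<int>" "q' * of_nat (r n2) \<in> \<int>"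
    using int_ex assms by blast
  then show ?thesis using that[of "max n1 n2"] int_mono[of q n1 "max n1 n2"] int_mono[of q' n2 "max n1 n2"]
    by simp
qed

context
  fixes g :: "nat \<Rightarrow> 'a" assumes g: "\<And>j. g j \<in> carrier G"
begin

lemma prodg_closed [simp]: "prodg G g f M \<in> carrier G"
  unfolding prodg_def by (rule finprod_closed) (simp add: g)

lemma prodg_Suc: "prodg G g f (Suc M) = g M [^] f M \<otimes> prodg G g f M"
  unfolding prodg_def lessThan_Suc by (subst finprod_insert) (auto simp: g)

lemma prodg_0 [simp]: "prodg G g f 0 = \<one>"
  unfolding prodg_def by simp

lemma prodg_add: "prodg G g (\<lambda>j. f j + f' j) M = prodg G g f M \<otimes> prodg G g f' M"
  by (induction M) (simp_all add: prodg_Suc int_pow_mult g m_ac)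

lemma prodg_zero: "prodg G g (\<lambda>_. 0) M = \<one>"
  by (induction M) (simp_all add: prodg_Suc g)

lemma prodg_stable: assumes "\<forall>j\<ge>M. f j = 0" "M \<le> M'" shows "prodg G g f M' = prodg G g f M"
  using assms(2) by (induction M' rule: dec_induct) (simp_all add: prodg_Suc g assms(1))

lemma coc_eq: assumes "\<forall>j\<ge>M. dco r q q' j = 0" shows "coc G r g q q' = prodg G g (dco r q q') M"
proof -
  let ?M0 = "SOME M. \<forall>j\<ge>M. dco r q q' j = 0"
  have M0: "\<forall>j\<ge>?M0. dco r q q' j = 0" using someI[of "\<lambda>M. \<forall>j\<ge>M. dco r q q' j = 0", OF assms] .
  have "coc G r g q q' = prodg G g (dco r q q') ?M0" by (simp add: coc_def)
  also have "\<dots> = prodg G g (dco r q q') (max M ?M0)" by (rule prodg_stable[OF M0, symmetric]) simp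
  also have "\<dots> = prodg G g (dco r q q') M" by (rule prodg_stable[OF assms]) simp
  finally show ?thesis .
qed

lemma coc_closed [simp]: "coc G r g q q' \<in> carrier G"
  by (simp add: coc_def)

lemma coc_comm: "coc G r g q q' = coc G r g q' q"
  by (simp add: coc_def dco_comm)

lemma coc_zero: "coc G r g 0 q = \<one>"
  by (simp add: coc_def dco_zero_left prodg_zero)

lemma coc_M:
  assumes "q * of_nat (r M) \<in> \<int>" "q' * of_nat (r M) \<in> \<int>"
  shows "coc G r g q q' = prodg G g (dco r q q') M"
proof (intro coc_eq allI impI)
  fix j assume j: "M \<le> j"
  show "dco r q q' j = 0" by (rule dco_zero[of q r j q', OF int_mono[OF assms(1) j] int_mono[OF assms(2) j]])
qed

lemma coc_assoc:
  assumes "q \<in> carrier (Zrho r)" "q' \<in> carrier (Zrho r)" "q'' \<in> carrier (Zrho r)"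
  shows "coc G r g q q' \<otimes> coc G r g (q + q') q'' = coc G r g q' q'' \<otimes> coc G r g q (q' + q'')"
proof -
  obtain M1 where M1: "q * of_nat (r M1) \<in> \<int>" "q' * of_nat (r M1) \<in> \<int>" using int_ex2 assms by blast
  obtain M2 where M2: "q'' * of_nat (r M2) \<in> \<int>" using int_ex assms by blast
  define M where "M = max M1 M2"
  have i: "q * of_nat (r M) \<in> \<int>" "q' * of_nat (r M) \<in> \<int>" "q'' * of_nat (r M) \<in> \<int>"
    unfolding M_def by (rule int_mono[OF M1(1) max.cobounded1], rule int_mono[OF M1(2) max.cobounded1],
      rule int_mono[OF M2 max.cobounded2])
  have i2: "(q + q') * of_nat (r M) \<in> \<int>" "(q' + q'') * of_nat (r M) \<in> \<int>"
    using i by (simp_all add: distrib_right)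
  have "coc G r g q q' \<otimes> coc G r g (q + q') q'' = prodg G g (\<lambda>j. dco r q q' j + dco r (q + q') q'' j) M"
    unfolding prodg_add coc_M[OF i(1,2)] coc_M[OF i2(1) i(3)] ..
  also have "(\<lambda>j. dco r q q' j + dco r (q + q') q'' j) = (\<lambda>j. dco r q' q'' j + dco r q (q' + q'') j)"
    by (simp add: dco_def fun_eq_iff add.assoc)
  also have "prodg G g \<dots> M = coc G r g q' q'' \<otimes> coc G r g q (q' + q'')"
    unfolding prodg_add coc_M[OF i(2,3)] coc_M[OF i(1) i2(2)] ..
  finally show ?thesis .
qed

lemma extE_comm_group: "comm_group (extE G r g)"
proof (rule comm_groupI)
  fix x y assume "x \<in> carrier (extE G r g)" "y \<in> carrier (extE G r g)"
  then show "x \<otimes>\<^bsub>extE G r g\<^esub> y \<in> carrier (extE G r g)"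
    by (auto simp: extE_def emult_def Zrho_closed simp del: Zrho_simps)
next
  show "\<one>\<^bsub>extE G r g\<^esub> \<in> carrier (extE G r g)"
    using Zrho_closed(3)[OF gen_in[of r 0] gen_in[of r 0]] by (auto simp: extE_def emult_def simp del: Zrho_simps)
next
  fix x y z assume "x \<in> carrier (extE G r g)" "y \<in> carrier (extE G r g)" "z \<in> carrier (extE G r g)"
  then obtain a b c q q' q'' where x: "x = (a, q)" "y = (b, q')" "z = (c, q'')"
    and c: "a \<in> carrier G" "b \<in> carrier G" "c \<in> carrier G"
    "q \<in> carrier (Zrho r)" "q' \<in> carrier (Zrho r)" "q'' \<in> carrier (Zrho r)"
    by (auto simp: extE_def emult_def simp del: Zrho_simps)
  have "a \<otimes> b \<otimes> coc G r g q q' \<otimes> c \<otimes> coc G r g (q + q') q''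
      = a \<otimes> b \<otimes> c \<otimes> (coc G r g q q' \<otimes> coc G r g (q + q') q'')"
    using c by (simp add: m_ac)
  also have "\<dots> = a \<otimes> b \<otimes> c \<otimes> (coc G r g q' q'' \<otimes> coc G r g q (q' + q''))"
    using coc_assoc[OF c(4-6)] by simp
  also have "\<dots> = a \<otimes> (b \<otimes> c \<otimes> coc G r g q' q'') \<otimes> coc G r g q (q' + q'')"
    using c by (simp add: m_ac)
  finally show "x \<otimes>\<^bsub>extE G r g\<^esub> y \<otimes>\<^bsub>extE G r g\<^esub> z =
        x \<otimes>\<^bsub>extE G r g\<^esub> (y \<otimes>\<^bsub>extE G r g\<^esub> z)"
    by (simp add: x extE_def emult_def add.assoc)
next
  fix x y assume "x \<in> carrier (extE G r g)" "y \<in> carrier (extE G r g)"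
  then show "x \<otimes>\<^bsub>extE G r g\<^esub> y = y \<otimes>\<^bsub>extE G r g\<^esub> x"
    by (auto simp: extE_def emult_def m_ac coc_comm add.commute simp del: Zrho_simps)
next
  fix x assume "x \<in> carrier (extE G r g)"
  then show "\<one>\<^bsub>extE G r g\<^esub> \<otimes>\<^bsub>extE G r g\<^esub> x = x"
    by (auto simp: extE_def emult_def coc_zero simp del: Zrho_simps)
next
  fix x assume "x \<in> carrier (extE G r g)"
  then obtain a q where x: "x = (a, q)" "a \<in> carrier G" "q \<in> carrier (Zrho r)"
    by (auto simp: extE_def emult_def simp del: Zrho_simps)
  let ?y = "(inv a \<otimes> inv (coc G r g (- q) q), - q)"
  have "?y \<in> carrier (extE G r g)" using x Zrho_closed[OF x(3) x(3)]
    by (auto simp: extE_def emult_def simp del: Zrho_simps)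
  moreover have "?y \<otimes>\<^bsub>extE G r g\<^esub> x = \<one>\<^bsub>extE G r g\<^esub>"
    using x by (simp add: extE_def emult_def m_ac)
  ultimately show "\<exists>y\<in>carrier (extE G r g). y \<otimes>\<^bsub>extE G r g\<^esub> x = \<one>\<^bsub>extE G r g\<^esub>" by blast
qed

end
end


lemma chi_zero: "chi r 0 = (\<lambda>_. 0)"
  by (simp add: chi_def fun_eq_iff)

context comm_group begin

lemma inv_cancel_l [simp]: "x \<in> carrier G \<Longrightarrow> y \<in> carrier G \<Longrightarrow> inv x \<otimes> (x \<otimes> y) = y"
  by (simp add: m_assoc[symmetric])

lemma inv_cancel_r [simp]: "x \<in> carrier G \<Longrightarrow> y \<in> carrier G \<Longrightarrow> x \<otimes> (inv x \<otimes> y) = y"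
  by (simp add: m_assoc[symmetric])

lemma cross:
  assumes "u \<otimes> a = b \<otimes> c" "u \<in> carrier G" "a \<in> carrier G" "b \<in> carrier G" "c \<in> carrier G"
  shows "u \<otimes> inv c = b \<otimes> inv a"
proof -
  have "u = (b \<otimes> c) \<otimes> inv a" using inv_solve_right[of u "b \<otimes> c" a] assms by simp
  also have "\<dots> = (b \<otimes> inv a) \<otimes> c" using assms by (simp add: m_ac)
  finally show ?thesis using inv_solve_right'[of "b \<otimes> inv a" u c] assms by simp
qed

lemma ms_carrier: "mult_sub G k \<subseteq> carrier G"
  by (auto simp: mult_sub_def)

lemma ms_pow: "a \<in> carrier G \<Longrightarrow> a [^] k \<in> mult_sub G k"
  unfolding mult_sub_def by auto

lemma ms_mult: assumes "x \<in> mult_sub G k" "y \<in> mult_sub G k" shows "x \<otimes> y \<in> mult_sub G k"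
proof -
  obtain a b where ab: "a \<in> carrier G" "b \<in> carrier G" "x = a [^] k" "y = b [^] k"
    using assms by (auto simp: mult_sub_def)
  then have "x \<otimes> y = (a \<otimes> b) [^] k" by (simp add: nat_pow_distrib)
  then show ?thesis using ab ms_pow by simp
qed

lemma ms_inv: assumes "x \<in> mult_sub G k" shows "inv x \<in> mult_sub G k"
proof -
  obtain a where ab: "a \<in> carrier G" "x = a [^] k"
    using assms by (auto simp: mult_sub_def)
  then have "inv x = (inv a) [^] k" by (simp add: nat_pow_inv)
  then show ?thesis using ab ms_pow by simp
qed

lemma ms_one: "\<one> \<in> mult_sub G k"
  unfolding mult_sub_def by (auto intro!: exI[of _ "\<one>"])

lemma ms_dvd: assumes "k dvd m" "x \<in> mult_sub G m" shows "x \<in> mult_sub G k"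
proof -
  obtain a where a: "a \<in> carrier G" "x = a [^] m" using assms(2) by (auto simp: mult_sub_def)
  obtain l where "m = k * l" using assms(1) by auto
  then have "x = (a [^] l) [^] k" using a by (simp add: nat_pow_pow mult.commute)
  then show ?thesis using a ms_pow by simp
qed

lemma ms_div: "x \<in> mult_sub G k \<Longrightarrow> y \<in> mult_sub G k \<Longrightarrow> x \<otimes> inv y \<in> mult_sub G k"
  by (intro ms_mult ms_inv)

end

context rset begin

lemma chi_one: "chi r 1 = (\<lambda>j. int (r j))"
  by (simp add: chi_def fun_eq_iff)

lemma forward:
  assumes ev: "ext_vanishes (Zrho r) G"
  shows "rho_complete G r"
  unfolding rho_complete_def
proof (intro allI impI, elim conjE)
  fix x assume xc: "\<forall>i. x i \<in> carrier G" and cau: "rho_cauchy G r x"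
  obtain Nf where Nf: "\<And>n i j. i \<ge> Nf n \<Longrightarrow> j \<ge> Nf n \<Longrightarrow> x i \<otimes> inv x j \<in> mult_sub G (r n)"
    using cau unfolding rho_cauchy_def by metis
  define Mi where "Mi n = (\<Sum>k\<le>n. Nf k)" for n
  have MiN: "Nf n \<le> Mi n" for n unfolding Mi_def by (rule member_le_sum) auto
  have Mimono: "Mi n \<le> Mi (Suc n)" for n unfolding Mi_def by simp
  define y where "y n = x (Mi n)" for n
  have yc: "y n \<in> carrier G" for n using xc by (simp add: y_def)
  have "\<forall>n. \<exists>a. a \<in> carrier G \<and> a [^] r n = y (Suc n) \<otimes> inv y n"
  proof
    fix n
    have "y (Suc n) \<otimes> inv y n \<in> mult_sub G (r n)"
      unfolding y_def using Nf MiN Mimono by (meson le_trans)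
    then show "\<exists>a. a \<in> carrier G \<and> a [^] r n = y (Suc n) \<otimes> inv y n"
      by (auto simp: mult_sub_def)
  qed
  then obtain g where gc: "\<And>n. g n \<in> carrier G" and gp: "\<And>n. g n [^] r n = y (Suc n) \<otimes> inv y n"
    by metis
  define E where "E = extE G r g"
  have Ecg: "comm_group E" unfolding E_def using extE_comm_group gc by blast
  define i :: "'a \<Rightarrow> 'a \<times> rat" where "i a = (a, 0)" for a
  have zA: "0 \<in> carrier (Zrho r)" using Zrho_closed(3)[OF gen_in[of r 0] gen_in[of r 0]] .
  have ihom: "i \<in> hom G E"
    unfolding hom_def using zA by (auto simp: i_def E_def extE_def emult_def coc_zero gc simp del: Zrho_simps(1))
  have iinj: "inj_on i (carrier G)" by (auto simp: i_def inj_on_def)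
  have phom: "snd \<in> hom E (Zrho r)"
    unfolding hom_def by (auto simp: E_def extE_def emult_def simp del: Zrho_simps(1))
  have psurj: "snd ` carrier E = carrier (Zrho r)"
    by (force simp: E_def extE_def simp del: Zrho_simps(1))
  have iker: "i ` carrier G = kernel E (Zrho r) snd"
    using zA by (auto simp: kernel_def i_def E_def extE_def simp del: Zrho_simps(1))
  obtain s where shom: "s \<in> hom (Zrho r) E" and sp: "\<And>a. a \<in> carrier (Zrho r) \<Longrightarrow> snd (s a) = a"
    using ev Ecg ihom iinj phom psurj iker unfolding ext_vanishes_def by blast
  define \<sigma> where "\<sigma> q = fst (s q)" for q
  have sc: "s q \<in> carrier E" if "q \<in> carrier (Zrho r)" for q
    using shom that unfolding hom_def by auto
  have \<sigma>c: "\<sigma> q \<in> carrier G" if "q \<in> carrier (Zrho r)" for q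
    using sc[OF that] by (auto simp: \<sigma>_def E_def extE_def)
  have s_eq: "s q = (\<sigma> q, q)" if "q \<in> carrier (Zrho r)" for q
    using sp[OF that] by (simp add: \<sigma>_def prod_eq_iff)
  have \<sigma>_add: "\<sigma> (q + q') = \<sigma> q \<otimes> \<sigma> q' \<otimes> coc G r g q q'"
    if "q \<in> carrier (Zrho r)" "q' \<in> carrier (Zrho r)" for q q'
  proof -
    have "s (q \<otimes>\<^bsub>Zrho r\<^esub> q') = s q \<otimes>\<^bsub>E\<^esub> s q'" using shom that unfolding hom_def by auto
    then have "s (q + q') = (\<sigma> q \<otimes> \<sigma> q' \<otimes> coc G r g q q', q + q')"
      using s_eq that by (simp add: E_def extE_def emult_def)
    then show ?thesis by (simp add: \<sigma>_def)
  qed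
  define sN where "sN N = prodg G g (\<lambda>j. int (r j)) N" for N
  have sN_eq: "sN N = y N \<otimes> inv (y 0)" for N
  proof (induction N)
    case 0 then show ?case using yc by (simp add: sN_def gc)
  next
    case (Suc N)
    have "sN (Suc N) = g N [^] r N \<otimes> sN N" by (simp add: sN_def prodg_Suc gc int_pow_int)
    also have "\<dots> = (y (Suc N) \<otimes> inv y N) \<otimes> (y N \<otimes> inv (y 0))" using Suc gp by simp
    also have "\<dots> = y (Suc N) \<otimes> inv (y 0)" using yc by (simp add: m_assoc)
    finally show ?case .
  qed
  have oneA: "1 \<in> carrier (Zrho r)" using gen_in[of r 0] r0 by simp
  have lim: "\<sigma> 1 \<otimes> inv (sN N) \<in> mult_sub G (r N)" for N
  proof -
    define e :: rat where "e = 1 / of_nat (r N)"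
    have eA: "e \<in> carrier (Zrho r)" unfolding e_def by (rule gen_in)
    have rN: "(of_nat (r N) :: rat) \<noteq> 0" using rpos by simp
    define F where "F q = prodg G g (chi r q) N" for q
    have Fc: "F q \<in> carrier G" for q by (simp add: F_def gc)
    have qA: "of_nat a * e \<in> carrier (Zrho r)" for a :: nat
    proof -
      interpret A: group "Zrho r" by (rule Zrho_group)
      show ?thesis using A.nat_pow_closed[OF eA, of a] by (simp add: Zrho_nat_pow)
    qed
    have qi: "(of_nat a * e) * of_nat (r N) \<in> \<int>" for a :: nat using rN by (simp add: e_def)
    have claim: "\<sigma> (of_nat a * e) \<otimes> F e [^] a = \<sigma> e [^] a \<otimes> F (of_nat a * e)" for a :: nat
    proof (induction a)
      case 0
      have "\<sigma> 0 = \<one>"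
      proof -
        have "\<sigma> (0 + 0) = \<sigma> 0 \<otimes> \<sigma> 0 \<otimes> coc G r g 0 0" using \<sigma>_add zA by blast
        then have "\<sigma> 0 \<otimes> \<one> = \<sigma> 0 \<otimes> \<sigma> 0" using \<sigma>c[OF zA] by (simp add: coc_zero gc)
        then show ?thesis using \<sigma>c[OF zA] by (metis l_cancel one_closed)
      qed
      moreover have "F 0 = \<one>" unfolding F_def chi_zero by (rule prodg_zero[OF gc])
      ultimately show ?case by simp
    next
      case (Suc a)
      let ?q = "of_nat a * e"
      have eq1: "of_nat (Suc a) * e = ?q + e" by (simp add: distrib_right)
      let ?P = "prodg G g (dco r ?q e) N"
      have Pc: "?P \<in> carrier G" by (simp add: gc)
      have coc1: "coc G r g ?q e = ?P"
        using coc_M[OF gc qi[of a]] qi[of 1] by simp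
      have "chi r (?q + e) = (\<lambda>j. dco r ?q e j + (chi r ?q j + chi r e j))"
        by (simp add: dco_def fun_eq_iff)
      then have F1: "F (?q + e) = ?P \<otimes> (F ?q \<otimes> F e)"
        unfolding F_def by (simp add: prodg_add gc)
      have "\<sigma> (of_nat (Suc a) * e) \<otimes> F e [^] Suc a = (\<sigma> ?q \<otimes> F e [^] a) \<otimes> (\<sigma> e \<otimes> ?P \<otimes> F e)"
        unfolding eq1 using \<sigma>_add[OF qA[of a] eA] coc1 \<sigma>c[OF qA[of a]] \<sigma>c[OF eA] Fc Pc
        by (simp add: m_ac)
      also have "\<dots> = (\<sigma> e [^] a \<otimes> F ?q) \<otimes> (\<sigma> e \<otimes> ?P \<otimes> F e)" using Suc by simp
      also have "\<dots> = \<sigma> e [^] Suc a \<otimes> F (of_nat (Suc a) * e)"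
        unfolding eq1 F1 using \<sigma>c[OF eA] Fc Pc by (simp add: m_ac)
      finally show ?case .
    qed
    have one: "of_nat (r N) * e = 1" using rN by (simp add: e_def)
    have F1: "F 1 = sN N" by (simp add: F_def sN_def chi_one)
    have "\<sigma> 1 \<otimes> F e [^] r N = \<sigma> e [^] r N \<otimes> sN N" using claim[of "r N"] one F1 by simp
    then have "\<sigma> 1 \<otimes> inv (sN N) = \<sigma> e [^] r N \<otimes> inv (F e [^] r N)"
      by (rule cross) (use \<sigma>c[OF eA] \<sigma>c[OF oneA] Fc in \<open>auto simp: sN_def gc\<close>)
    also have "\<dots> = (\<sigma> e \<otimes> inv (F e)) [^] r N"
      using \<sigma>c[OF eA] Fc by (simp add: nat_pow_distrib nat_pow_inv)
    finally show ?thesis using \<sigma>c[OF eA] Fc by (simp add: ms_pow)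
  qed
  define L where "L = \<sigma> 1 \<otimes> y 0"
  have Lc: "L \<in> carrier G" using \<sigma>c[OF oneA] yc by (simp add: L_def)
  have "rho_converges G r x L"
    unfolding rho_converges_def
  proof
    fix n
    show "\<exists>N. \<forall>i\<ge>N. x i \<otimes> inv L \<in> mult_sub G (r n)"
    proof (intro exI allI impI)
      fix i assume i: "Mi n \<le> i"
      have a: "x i \<otimes> inv (y n) \<in> mult_sub G (r n)"
        unfolding y_def using Nf MiN i by (meson le_trans order_refl)
      have "inv (\<sigma> 1 \<otimes> inv (sN n)) = y n \<otimes> inv L"
        unfolding sN_eq L_def using \<sigma>c[OF oneA] yc
        by (simp add: inv_mult m_ac)
      then have b: "y n \<otimes> inv L \<in> mult_sub G (r n)" using lim[of n] ms_inv by metis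
      have "(x i \<otimes> inv (y n)) \<otimes> (y n \<otimes> inv L) = x i \<otimes> inv L"
        using xc yc Lc by (simp add: m_assoc)
      then show "x i \<otimes> inv L \<in> mult_sub G (r n)"
        using ms_mult[OF a b] by simp
    qed
  qed
  then show "\<exists>g\<in>carrier G. rho_converges G r x g" using Lc by blast
qed

end


context comm_group begin

lemma tf_root:
  assumes tf: "torsion_free G" and c: "a \<in> carrier G" "b \<in> carrier G" and m: "(m::nat) > 0"
    and eq: "a [^] m = b [^] m"
  shows "a = b"
proof -
  have "(a \<otimes> inv b) [^] m = a [^] m \<otimes> inv (b [^] m)" using c by (simp add: nat_pow_distrib nat_pow_inv)
  also have "\<dots> = \<one>" using eq c by simp
  finally have "a \<otimes> inv b = \<one>" using tf c m unfolding torsion_free_def by blast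
  then show ?thesis using inv_solve_right'[of \<one> a b] c by simp
qed

lemma div_div: "a \<in> carrier G \<Longrightarrow> b \<in> carrier G \<Longrightarrow> c \<in> carrier G \<Longrightarrow>
   (a \<otimes> inv c) \<otimes> inv (b \<otimes> inv c) = a \<otimes> inv b"
  by (simp add: inv_mult_group m_assoc)

lemma div_div2: "a \<in> carrier G \<Longrightarrow> L \<in> carrier G \<Longrightarrow> s \<in> carrier G \<Longrightarrow>
   inv (a \<otimes> inv L) \<otimes> (a \<otimes> inv s) = L \<otimes> inv s"
  by (simp add: inv_mult_group m_assoc)

lemma div_div3: "a \<in> carrier G \<Longrightarrow> L \<in> carrier G \<Longrightarrow> s \<in> carrier G \<Longrightarrow>
   a \<otimes> (L \<otimes> inv (a \<otimes> s)) = L \<otimes> inv s"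
proof -
  assume c: "a \<in> carrier G" "L \<in> carrier G" "s \<in> carrier G"
  have "a \<otimes> (L \<otimes> inv (a \<otimes> s)) = a \<otimes> (L \<otimes> (inv a \<otimes> inv s))" using c by (simp add: inv_mult)
  also have "\<dots> = L \<otimes> (a \<otimes> (inv a \<otimes> inv s))" using c m_lcomm[of a L] by simp
  also have "\<dots> = L \<otimes> inv s" using c by simp
  finally show ?thesis .
qed

end

context rset begin

lemma backward:
  assumes tf: "torsion_free G" and comp: "rho_complete G r"
  shows "ext_vanishes (Zrho r) G"
  unfolding ext_vanishes_def
proof (intro allI impI, elim conjE)
  fix E :: "('a \<times> rat) monoid" and i p
  assume Ecg: "comm_group E" and ihom: "i \<in> hom G E" and iinj: "inj_on i (carrier G)"
    and phom: "p \<in> hom E (Zrho r)" and psurj: "p ` carrier E = carrier (Zrho r)"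
    and iker: "i ` carrier G = kernel E (Zrho r) p"
  interpret E: comm_group E by (rule Ecg)
  interpret A: comm_group "Zrho r" by (rule Zrho_comm_group)
  interpret I: group_hom G E i
    by (intro group_hom.intro group_hom_axioms.intro ihom) (simp_all add: is_group E.is_group)
  interpret P: group_hom E "Zrho r" p
    by (intro group_hom.intro group_hom_axioms.intro phom) (simp_all add: A.is_group E.is_group)
  have pi0: "p (i a) = 0" if "a \<in> carrier G" for a
    using iker that by (auto simp: kernel_def simp del: Zrho_simps(1))
  have "\<forall>n. \<exists>z. z \<in> carrier E \<and> p z = 1 / of_nat (r n)"
    using psurj gen_in[of r] by (metis imageE)
  then obtain y where yc: "\<And>n. y n \<in> carrier E" and yp: "\<And>n. p (y n) = 1 / of_nat (r n)"
    by metis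
  define k where "k n = r (Suc n) div r n" for n
  have rk: "r (Suc n) = r n * k n" for n using rdvd unfolding k_def by simp
  have "\<forall>n. \<exists>a. a \<in> carrier G \<and> i a = y (Suc n) [^]\<^bsub>E\<^esub> k n \<otimes>\<^bsub>E\<^esub> inv\<^bsub>E\<^esub> y n"
  proof
    fix n
    have rn: "(of_nat (r n) :: rat) \<noteq> 0" using rpos by simp
    have kn: "k n \<noteq> 0" using rk[of n] rpos by (metis less_not_refl mult_0_right)
    have "p (y (Suc n) [^]\<^bsub>E\<^esub> k n \<otimes>\<^bsub>E\<^esub> inv\<^bsub>E\<^esub> y n)
        = of_nat (k n) * (1 / of_nat (r (Suc n))) + - (1 / of_nat (r n))"
      using yc yp gen_in[of r] by (simp add: P.hom_nat_pow Zrho_nat_pow Zrho_inv del: Zrho_simps(1))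
    also have "\<dots> = 0" unfolding rk using rn kn by (simp add: field_simps)
    finally have "y (Suc n) [^]\<^bsub>E\<^esub> k n \<otimes>\<^bsub>E\<^esub> inv\<^bsub>E\<^esub> y n \<in> kernel E (Zrho r) p"
      using yc by (simp add: kernel_def)
    then show "\<exists>a. a \<in> carrier G \<and> i a = y (Suc n) [^]\<^bsub>E\<^esub> k n \<otimes>\<^bsub>E\<^esub> inv\<^bsub>E\<^esub> y n"
      using iker by (metis imageE)
  qed
  then obtain g where gc: "\<And>n. g n \<in> carrier G"
    and gi: "\<And>n. i (g n) = y (Suc n) [^]\<^bsub>E\<^esub> k n \<otimes>\<^bsub>E\<^esub> inv\<^bsub>E\<^esub> y n"
    by metis
  define sN where "sN N = prodg G g (\<lambda>j. int (r j)) N" for N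
  have sNc: "sN N \<in> carrier G" for N by (simp add: sN_def gc)
  have sN_Suc: "sN (Suc N) = g N [^] r N \<otimes> sN N" for N
    by (simp add: sN_def prodg_Suc gc int_pow_int)
  have sN_cau: "sN m \<otimes> inv (sN n) \<in> mult_sub G (r n)" if "n \<le> m" for n m
    using that
  proof (induction m rule: dec_induct)
    case base then show ?case using sNc ms_one by simp
  next
    case (step m)
    have "g m [^] r m \<in> mult_sub G (r n)"
      using ms_dvd[OF r_dvd[OF step(1)] ms_pow[OF gc]] .
    then have "g m [^] r m \<otimes> (sN m \<otimes> inv (sN n)) \<in> mult_sub G (r n)"
      using ms_mult step(3) by blast
    then show ?case using sNc gc by (simp add: sN_Suc m_assoc)
  qed
  have "rho_cauchy G r sN"
    unfolding rho_cauchy_def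
  proof (rule allI)
    fix n
    show "\<exists>N. \<forall>a\<ge>N. \<forall>b\<ge>N. sN a \<otimes> inv (sN b) \<in> mult_sub G (r n)"
    proof (intro exI[of _ n] allI impI)
      fix a b :: nat assume "n \<le> a" "n \<le> b"
      then have "(sN a \<otimes> inv (sN n)) \<otimes> inv (sN b \<otimes> inv (sN n)) \<in> mult_sub G (r n)"
        using sN_cau ms_mult ms_inv by blast
      then show "sN a \<otimes> inv (sN b) \<in> mult_sub G (r n)" using sNc by (simp add: div_div)
    qed
  qed
  then obtain L where Lc: "L \<in> carrier G" and conv: "rho_converges G r sN L"
    using comp sNc unfolding rho_complete_def by blast
  obtain Nc where Nc: "\<And>n a. a \<ge> Nc n \<Longrightarrow> sN a \<otimes> inv L \<in> mult_sub G (r n)"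
    using conv unfolding rho_converges_def by metis
  have u: "L \<otimes> inv (sN n) \<in> mult_sub G (r n)" for n
  proof -
    define m where "m = max n (Nc n)"
    have "inv (sN m \<otimes> inv L) \<otimes> (sN m \<otimes> inv (sN n)) \<in> mult_sub G (r n)"
      using ms_mult ms_inv Nc[of n m] sN_cau[of n m] unfolding m_def by simp
    then show ?thesis using sNc Lc by (simp add: div_div2)
  qed
  have "\<forall>n. \<exists>w. w \<in> carrier G \<and> w [^] r n = L \<otimes> inv (sN n)"
  proof
    fix n
    obtain x where "x \<in> carrier G" "L \<otimes> inv (sN n) = x [^] r n"
      using u[of n] unfolding mult_sub_def by blast
    then show "\<exists>w. w \<in> carrier G \<and> w [^] r n = L \<otimes> inv (sN n)" by auto
  qed
  then obtain w where wc: "\<And>n. w n \<in> carrier G" and wp: "\<And>n. w n [^] r n = L \<otimes> inv (sN n)"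
    by metis
  have wrel: "w n = g n \<otimes> w (Suc n) [^] k n" for n
  proof (rule tf_root[OF tf wc])
    show "g n \<otimes> w (Suc n) [^] k n \<in> carrier G" using gc wc by simp
    show "0 < r n" using rpos by simp
    have "(g n \<otimes> w (Suc n) [^] k n) [^] r n = g n [^] r n \<otimes> w (Suc n) [^] r (Suc n)"
      using gc wc by (simp add: nat_pow_distrib nat_pow_pow rk mult.commute)
    also have "\<dots> = g n [^] r n \<otimes> (L \<otimes> inv (g n [^] r n \<otimes> sN n))" by (simp add: wp sN_Suc)
    also have "\<dots> = L \<otimes> inv (sN n)" using gc Lc sNc by (simp add: div_div3)
    finally show "w n [^] r n = (g n \<otimes> w (Suc n) [^] k n) [^] r n" by (simp add: wp)
  qed
  define z where "z n = y n \<otimes>\<^bsub>E\<^esub> i (w n)" for n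
  have zc: "z n \<in> carrier E" for n using yc wc by (simp add: z_def)
  have pz: "p (z n) = 1 / of_nat (r n)" for n
    using yc wc by (simp add: z_def yp pi0 del: Zrho_simps(1))
  have zrel: "z (Suc n) [^]\<^bsub>E\<^esub> k n = z n" for n
  proof -
    have y1: "y (Suc n) [^]\<^bsub>E\<^esub> k n = i (g n) \<otimes>\<^bsub>E\<^esub> y n"
      using E.inv_solve_right'[of "i (g n)" "y (Suc n) [^]\<^bsub>E\<^esub> k n" "y n"] gi[of n] yc gc by simp
    have "z (Suc n) [^]\<^bsub>E\<^esub> k n = y (Suc n) [^]\<^bsub>E\<^esub> k n \<otimes>\<^bsub>E\<^esub> i (w (Suc n) [^] k n)"
      using yc wc by (simp add: z_def E.nat_pow_distrib I.hom_nat_pow)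
    also have "\<dots> = y n \<otimes>\<^bsub>E\<^esub> (i (g n) \<otimes>\<^bsub>E\<^esub> i (w (Suc n) [^] k n))"
      using yc wc gc by (simp add: y1 E.m_ac)
    also have "\<dots> = z n" using gc wc by (simp add: z_def wrel[of n])
    finally show ?thesis .
  qed
  define V where "V q M = z M [^]\<^bsub>E\<^esub> chi r q M" for q M
  have Vc: "V q M \<in> carrier E" for q M using zc by (simp add: V_def)
  have V_Suc: "V q (Suc M) = V q M" if "q * of_nat (r M) \<in> \<int>" for q M
  proof -
    have i1: "q * of_nat (r (Suc M)) \<in> \<int>" by (rule int_mono[OF that]) simp
    have "(of_int (chi r q (Suc M)) :: rat) = of_int (int (k M) * chi r q M)"
      using chi_int[of q r "Suc M", OF i1] chi_int[of q r M, OF that] by (simp add: rk)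
    then have c: "chi r q (Suc M) = int (k M) * chi r q M" by (simp only: of_int_eq_iff)
    have "V q (Suc M) = (z (Suc M) [^]\<^bsub>E\<^esub> int (k M)) [^]\<^bsub>E\<^esub> chi r q M"
      unfolding V_def c using zc by (simp add: E.int_pow_pow)
    also have "\<dots> = V q M" using zrel by (simp add: V_def int_pow_int)
    finally show ?thesis .
  qed
  have V_mono: "V q M' = V q M" if "q * of_nat (r M) \<in> \<int>" "M \<le> M'" for q M M'
    using that(2)
  proof (induction M' rule: dec_induct)
    case base then show ?case by simp
  next
    case (step m) then show ?case using V_Suc[OF int_mono[OF that(1) step(1)]] by simp
  qed
  define s where "s q = V q (SOME M. q * of_nat (r M) \<in> \<int>)" for q
  have s_any: "s q = V q M" if "q * of_nat (r M) \<in> \<int>" for q M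
  proof -
    let ?M0 = "SOME M. q * of_nat (r M) \<in> \<int>"
    have M0: "q * of_nat (r ?M0) \<in> \<int>" using someI[of "\<lambda>M. q * of_nat (r M) \<in> \<int>", OF that] .
    have "s q = V q (max M ?M0)" unfolding s_def by (rule V_mono[OF M0, symmetric]) simp
    also have "\<dots> = V q M" by (rule V_mono[OF that]) simp
    finally show ?thesis .
  qed
  have shom: "s \<in> hom (Zrho r) E"
  proof (rule homI)
    fix q assume "q \<in> carrier (Zrho r)"
    then obtain M where "q * of_nat (r M) \<in> \<int>" using int_ex by blast
    then have "s q = V q M" by (rule s_any)
    then show "s q \<in> carrier E" using Vc by simp
  next
    fix q q' assume qA: "q \<in> carrier (Zrho r)" "q' \<in> carrier (Zrho r)"
    obtain M where M: "q * of_nat (r M) \<in> \<int>" "q' * of_nat (r M) \<in> \<int>" using int_ex2[OF qA] by blast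
    have M2: "(q + q') * of_nat (r M) \<in> \<int>" using M by (simp add: distrib_right)
    have "chi r (q + q') M = chi r q M + chi r q' M"
      using dco_zero[of q r M q', OF M] by (simp add: dco_def)
    then have "V (q + q') M = V q M \<otimes>\<^bsub>E\<^esub> V q' M" using zc by (simp add: V_def E.int_pow_mult)
    then show "s (q \<otimes>\<^bsub>Zrho r\<^esub> q') = s q \<otimes>\<^bsub>E\<^esub> s q'"
      using s_any[OF M(1)] s_any[OF M(2)] s_any[OF M2] by simp
  qed
  have "p (s q) = q" if qA: "q \<in> carrier (Zrho r)" for q
  proof -
    obtain M where M: "q * of_nat (r M) \<in> \<int>" using int_ex[OF qA] by blast
    have rn: "(of_nat (r M) :: rat) \<noteq> 0" using rpos by simp
    have "p (s q) = p (z M [^]\<^bsub>E\<^esub> chi r q M)" using s_any[OF M] by (simp add: V_def)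
    also have "\<dots> = p (z M) [^]\<^bsub>Zrho r\<^esub> chi r q M" by (rule P.hom_int_pow[OF zc])
    also have "\<dots> = (1 / of_nat (r M)) [^]\<^bsub>Zrho r\<^esub> chi r q M" by (simp only: pz)
    also have "\<dots> = of_int (chi r q M) * (1 / of_nat (r M))" by (rule Zrho_int_pow[OF gen_in])
    also have "\<dots> = q" using chi_int[of q r M, OF M] rn by simp
    finally show ?thesis .
  qed
  then have ps: "\<forall>a\<in>carrier (Zrho r). p (s a) = a" by simp
  show "\<exists>s\<in>hom (Zrho r) E. \<forall>a\<in>carrier (Zrho r). p (s a) = a"
    using ps shom by blast
qed

end

theorem corollary4p1:
  fixes r :: "nat \<Rightarrow> nat" and G :: "('g, 'b) monoid_scheme"
  assumes "\<forall>n. r n > 0" and "r 0 = 1" and "\<forall>n. r n dvd r (Suc n)"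
    and "comm_group G" and "torsion_free G"
    and "(\<Inter>n. mult_sub G (r n)) = {\<one>\<^bsub>G\<^esub>}"
  shows "ext_vanishes (Zrho r) G \<longleftrightarrow> rho_complete G r"
proof -
  interpret rset G r using assms(1-4) by (simp add: rset_def rset_axioms_def)
  show ?thesis using forward backward assms(5) by blast
qed

end
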